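(* Let $n\ge2$, $r\ge1$, $q_1,q_2\in\mathbb{C}$ with $q_1q_2\ne0$ and $q=-q_2/q_1$ not a root of unity, and $[n]_q=1+q+\cdots+q^{n-1}$. Then the rules $s_i\cdot(v_1\otimes\cdots\otimes v_r)=v_1\otimes\cdots\otimes v_{i+1}\otimes v_i\otimes\cdots\otimes v_r$ (swap of the $i$th and $(i+1)$st factors, $1\le i\le r-1$) and $p_j\cdot(v_1\otimes\cdots\otimes v_r)=v_1\otimes\cdots\otimes Pv_j\otimes\cdots\otimes v_r$ ($1\le j\le r$) extend to a well-defined structure of left $\mathcal{P}'_r([n]_q)$-module on $\mathbf{E}^{\otimes r}$.
   Context: $\mathbf{E}=\mathbb{C}^n$ with basis $e_1,\dots,e_n$; $P\in\operatorname{End}(\mathbf{E})$ is given by $Pe_j=q^{j-1}(e_1+\cdots+e_n)$. Partial permutations of $\{1,\dots,r\}$ are bijections $d:X\to Y$ between subsets $X=\mathrm{dom}(d)$, $Y=\mathrm{im}(d)$, written on the right and composed by $x(d_1\circ d_2)=(xd_1)d_2$. For $z\ne0$, $\mathcal{P}'_r(z)$ is the algebra with basis the partial permutations and product $d_1d_2=z^N(d_1\circ d_2)$, $N=r-|\mathrm{im}(d_1)\cup\mathrm{dom}(d_2)|$ (the subalgebra of the partition algebra spanned by partial-permutation diagrams). It is generated by $s_i$ (the permutation swapping $i,i+1$) and $p_j$ (the identity map of $\{1,\dots,r\}\setminus\{j\}$). *)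

theory Defs
  imports Complex_Main
begin

text \<open>Basis of E^{tensor r}: words w of length r with letters in {0..<n};
  e_w = e_{w!0+1} (x) ... (x) e_{w!(r-1)+1}.  Operators on E^{tensor r} are
  represented by matrices indexed by such words.  Positions and letters are 0-based.\<close>

definition words :: "nat \<Rightarrow> nat \<Rightarrow> nat list set" where
  "words n r = {w. length w = r \<and> set w \<subseteq> {0..<n}}"

type_synonym tmat = "nat list \<Rightarrow> nat list \<Rightarrow> complex"

definition tmul :: "nat \<Rightarrow> nat \<Rightarrow> tmat \<Rightarrow> tmat \<Rightarrow> tmat" where
  "tmul n r A B = (\<lambda>w u. \<Sum>v\<in>words n r. A w v * B v u)"

definition tid :: tmat where
  "tid = (\<lambda>w u. if w = u then 1 else 0)"

definition tscale :: "complex \<Rightarrow> tmat \<Rightarrow> tmat" where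
  "tscale c A = (\<lambda>w u. c * A w u)"

definition swap_op :: "nat \<Rightarrow> tmat" where
  "swap_op i = (\<lambda>w u. if w = u[i := u ! Suc i, Suc i := u ! i] then 1 else 0)"

text \<open>P e_b = q^b (e_0 + ... + e_{n-1}) (0-based letters), applied at factor j.\<close>
definition P_op :: "complex \<Rightarrow> nat \<Rightarrow> tmat" where
  "P_op q j = (\<lambda>w u. if length w = length u \<and> (\<forall>k<length u. k \<noteq> j \<longrightarrow> w ! k = u ! k)
                     then q ^ (u ! j) else 0)"

definition partial_perm :: "nat \<Rightarrow> (nat \<Rightarrow> nat option) \<Rightarrow> bool" where
  "partial_perm r d \<longleftrightarrow> dom d \<subseteq> {0..<r} \<and> ran d \<subseteq> {0..<r} \<and> inj_on d (dom d)"

text \<open>Right-action composition: x (d1 \<circ> d2) = (x d1) d2.\<close>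
definition pp_comp :: "(nat \<Rightarrow> nat option) \<Rightarrow> (nat \<Rightarrow> nat option) \<Rightarrow> (nat \<Rightarrow> nat option)" where
  "pp_comp d1 d2 = d2 \<circ>\<^sub>m d1"

text \<open>Exponent N = r - |im d1 \<union> dom d2| in the product d1 d2 = z^N (d1 \<circ> d2).\<close>
definition pp_N :: "nat \<Rightarrow> (nat \<Rightarrow> nat option) \<Rightarrow> (nat \<Rightarrow> nat option) \<Rightarrow> nat" where
  "pp_N r d1 d2 = r - card (ran d1 \<union> dom d2)"

definition pp_id :: "nat \<Rightarrow> nat \<Rightarrow> nat option" where
  "pp_id r = (\<lambda>k. if k < r then Some k else None)"

definition pp_s :: "nat \<Rightarrow> nat \<Rightarrow> nat \<Rightarrow> nat option" where
  "pp_s r i = (\<lambda>k. if k < r then Some (if k = i then Suc i else if k = Suc i then i else k) else None)"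

definition pp_p :: "nat \<Rightarrow> nat \<Rightarrow> nat \<Rightarrow> nat option" where
  "pp_p r j = (\<lambda>k. if k < r \<and> k \<noteq> j then Some k else None)"

definition qint :: "nat \<Rightarrow> complex \<Rightarrow> complex" where
  "qint n q = (\<Sum>k<n. q ^ k)"

end

theory Submission
  imports Defs
begin


lemma finite_words: "finite (words n r)"
proof -
  have "words n r = {xs. set xs \<subseteq> {0..<n} \<and> length xs = r}" by (auto simp: words_def)
  thus ?thesis by (simp add: finite_lists_length_eq)
qed

lemma words_Suc: "words n (Suc r) = (\<lambda>(v,a). v @ [a]) ` (words n r \<times> {..<n})"
proof
  show "words n (Suc r) \<subseteq> (\<lambda>(v,a). v @ [a]) ` (words n r \<times> {..<n})"
  proof
    fix x assume "x \<in> words n (Suc r)"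
    then obtain ys y where "x = ys @ [y]" "length ys = r" "set x \<subseteq> {0..<n}"
      by (auto simp: words_def length_Suc_conv_rev)
    thus "x \<in> (\<lambda>(v,a). v @ [a]) ` (words n r \<times> {..<n})"
      by (auto simp: words_def image_iff)
  qed
qed (auto simp: words_def)

lemma sum_words_prod:
  fixes g :: "nat \<Rightarrow> nat \<Rightarrow> complex"
  shows "(\<Sum>v\<in>words n r. \<Prod>m<r. g m (v!m)) = (\<Prod>m<r. \<Sum>a<n. g m a)"
proof (induction r)
  case 0
  have "words n 0 = {[]}" by (auto simp: words_def)
  thus ?case by simp
next
  case (Suc r)
  have inj: "inj_on (\<lambda>(v,a). v @ [a]) (words n r \<times> {..<n})"
    by (auto simp: inj_on_def)
  have "(\<Sum>v\<in>words n (Suc r). \<Prod>m<Suc r. g m (v!m))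
      = (\<Sum>(v,a)\<in>words n r \<times> {..<n}. \<Prod>m<Suc r. g m ((v@[a])!m))"
    unfolding words_Suc sum.reindex[OF inj] by (simp add: comp_def case_prod_beta del: prod.lessThan_Suc)
  also have "\<dots> = (\<Sum>(v,a)\<in>words n r \<times> {..<n}. (\<Prod>m<r. g m (v!m)) * g r a)"
  proof -
    have *: "(\<Prod>m<Suc r. g m ((v@[a])!m)) = (\<Prod>m<r. g m (v!m)) * g r a" if "v \<in> words n r" for v a
    proof -
      from that have l: "length v = r" by (simp add: words_def)
      have "(\<Prod>m<Suc r. g m ((v@[a])!m)) = (\<Prod>m<r. g m ((v@[a])!m)) * g r a"
        using l by (simp add: nth_append)
      also have "(\<Prod>m<r. g m ((v@[a])!m)) = (\<Prod>m<r. g m (v!m))"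
        using l by (intro prod.cong) (auto simp: nth_append)
      finally show ?thesis .
    qed
    show ?thesis by (rule sum.cong[OF refl]) (auto simp: * simp del: prod.lessThan_Suc)
  qed
  also have "\<dots> = (\<Sum>v\<in>words n r. \<Prod>m<r. g m (v!m)) * (\<Sum>a<n. g r a)"
    by (simp add: sum_product sum.cartesian_product)
  also have "\<dots> = (\<Prod>m<Suc r. \<Sum>a<n. g m a)" using Suc by simp
  finally show ?case .
qed


definition rho :: "complex \<Rightarrow> nat \<Rightarrow> (nat \<Rightarrow> nat option) \<Rightarrow> tmat" where
  "rho q r d = (\<lambda>w u. (if \<forall>k<r. \<forall>m. d k = Some m \<longrightarrow> w!k = u!m then 1 else 0)
                       * (\<Prod>m\<in>{..<r} - ran d. q^(u!m)))"

lemma prod_ind: "finite A \<Longrightarrow> (\<Prod>m\<in>A. if P m then 1 else 0 :: complex) = (if \<forall>m\<in>A. P m then 1 else 0)"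
  by (induction A rule: finite_induct) auto

lemma prod_diff: "finite A \<Longrightarrow> (\<Prod>m\<in>A - B. f m) = (\<Prod>m\<in>A. if m \<notin> B then f m else (1::complex))"
  by (simp add: prod.inter_filter[symmetric] set_diff_eq)

lemma prod_const_if: "finite A \<Longrightarrow> (\<Prod>m\<in>A. if P m then c else (1::complex)) = c ^ card {m\<in>A. P m}"
  by (simp add: prod.inter_filter[symmetric])

lemma pp_facts:
  assumes "partial_perm r d"
  shows "d k = Some m \<Longrightarrow> k < r" "d k = Some m \<Longrightarrow> m < r"
    "d a = Some j \<Longrightarrow> d b = Some j \<Longrightarrow> a = b"
proof -
  show "d k = Some m \<Longrightarrow> k < r" using assms by (auto simp: partial_perm_def dom_def)
  show "d k = Some m \<Longrightarrow> m < r" using assms by (auto simp: partial_perm_def ran_def)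
  show "d a = Some j \<Longrightarrow> d b = Some j \<Longrightarrow> a = b" using assms
    unfolding partial_perm_def inj_on_def by (metis domI)
qed

lemma words_nth: "w \<in> words n r \<Longrightarrow> k < r \<Longrightarrow> w!k < n"
  unfolding words_def using nth_mem by fastforce

lemma rho_mult:
  assumes pd1: "partial_perm r d1" and pd2: "partial_perm r d2"
    and w: "w \<in> words n r" and u: "u \<in> words n r"
  shows "tmul n r (rho q r d1) (rho q r d2) w u
       = qint n q ^ pp_N r d1 d2 * rho q r (pp_comp d1 d2) w u"
proof -
  note f1 = pp_facts[OF pd1] and f2 = pp_facts[OF pd2]
  define I1 where "I1 m a = (if \<forall>k. d1 k = Some m \<longrightarrow> w!k = a then 1 else 0 :: complex)" for m a
  define Q where "Q m a = (if m \<notin> ran d1 then q^a else 1)" for m a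
  define I2 where "I2 m a = (if \<forall>j. d2 m = Some j \<longrightarrow> a = u!j then 1 else 0::complex)" for m a
  define Bu where "Bu = (\<Prod>m\<in>{..<r} - ran d2. q^(u!m))"
  define g where "g m a = I1 m a * Q m a * I2 m a" for m a
  have s1: "rho q r d1 w v * rho q r d2 v u = (\<Prod>m<r. g m (v!m)) * Bu" if v: "v\<in>words n r" for v
  proof -
    have c1: "(\<forall>k<r. \<forall>m. d1 k = Some m \<longrightarrow> w!k = v!m) \<longleftrightarrow> (\<forall>m\<in>{..<r}. \<forall>k. d1 k = Some m \<longrightarrow> w!k = v!m)"
      using f1(1,2) by blast
    have c2: "(\<forall>k<r. \<forall>m. d2 k = Some m \<longrightarrow> v!k = u!m) \<longleftrightarrow> (\<forall>m\<in>{..<r}. \<forall>j. d2 m = Some j \<longrightarrow> v!m = u!j)"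
      by blast
    have r1: "rho q r d1 w v = (\<Prod>m<r. I1 m (v!m)) * (\<Prod>m<r. Q m (v!m))"
      unfolding rho_def I1_def Q_def c1 by (simp add: prod_ind prod_diff)
    have r2: "rho q r d2 v u = (\<Prod>m<r. I2 m (v!m)) * Bu"
      unfolding rho_def I2_def Bu_def c2 by (simp add: prod_ind)
    show ?thesis unfolding r1 r2 g_def by (simp add: prod.distrib mult_ac)
  qed
  define A where "A m = (if \<forall>k j. d1 k = Some m \<longrightarrow> d2 m = Some j \<longrightarrow> w!k = u!j then 1 else 0 :: complex)" for m
  define B where "B m = (if m \<notin> ran d1 \<and> m \<notin> dom d2 then qint n q else 1)" for m
  define C where "C m = (if m \<notin> ran d1 \<and> m \<in> dom d2 then q^(u!(the (d2 m))) else 1)" for m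
  have s2: "(\<Sum>a<n. g m a) = A m * B m * C m" if m: "m < r" for m
  proof (cases "m \<in> ran d1")
    case True
    then obtain k where k: "d1 k = Some m" by (auto simp: ran_def)
    have kr: "k < r" by (rule f1(1)[OF k])
    have e1: "I1 m a = (if a = w!k then 1 else 0)" for a
    proof -
      have "(\<forall>k'. d1 k' = Some m \<longrightarrow> w!k' = a) \<longleftrightarrow> a = w!k"
        using k f1(3)[OF _ k] by metis
      thus ?thesis unfolding I1_def by simp
    qed
    have wk: "w!k < n" using words_nth[OF w kr] .
    show ?thesis
    proof (cases "d2 m")
      case None
      have "(\<Sum>a<n. g m a) = (\<Sum>a<n. if a = w!k then 1 else 0)"
        by (rule sum.cong) (auto simp: g_def e1 Q_def I2_def None True)
      also have "\<dots> = 1" using wk by simp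
      finally show ?thesis by (simp add: A_def B_def C_def None True)
    next
      case (Some j)
      have "(\<Sum>a<n. g m a) = (\<Sum>a<n. if a = w!k then (if w!k = u!j then 1 else 0) else 0)"
        by (rule sum.cong) (auto simp: g_def e1 Q_def I2_def Some True)
      also have "\<dots> = (if w!k = u!j then 1 else 0)" using wk by simp
      also have "\<dots> = A m" unfolding A_def using k f1(3)[OF _ k] Some by (smt (verit) option.inject)
      finally show ?thesis by (simp add: B_def C_def Some True)
    qed
  next
    case False
    have nk: "d1 k \<noteq> Some m" for k using False by (auto simp: ran_def)
    have e1: "I1 m a = 1" for a using False unfolding I1_def by (auto simp: ran_def)
    show ?thesis
    proof (cases "d2 m")
      case None
      have "(\<Sum>a<n. g m a) = (\<Sum>a<n. q^a)"
        by (rule sum.cong) (auto simp: g_def e1 Q_def I2_def None False)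
      thus ?thesis by (simp add: A_def B_def C_def None False qint_def domIff)
    next
      case (Some j)
      have uj: "u!j < n" using words_nth[OF u f2(2)[OF Some]] .
      have "(\<Sum>a<n. g m a) = (\<Sum>a<n. if a = u!j then q^(u!j) else 0)"
        by (rule sum.cong) (auto simp: g_def e1 Q_def I2_def Some False)
      also have "\<dots> = q^(u!j)" using uj by simp
      finally show ?thesis by (simp add: A_def B_def C_def Some False domI nk)
    qed
  qed
  have "tmul n r (rho q r d1) (rho q r d2) w u = (\<Sum>v\<in>words n r. (\<Prod>m<r. g m (v!m))) * Bu"
    unfolding tmul_def by (simp add: sum_distrib_right s1 cong: sum.cong)
  also have "\<dots> = (\<Prod>m<r. \<Sum>a<n. g m a) * Bu" by (simp add: sum_words_prod)
  also have "\<dots> = (\<Prod>m<r. A m) * (\<Prod>m<r. B m) * ((\<Prod>m<r. C m) * Bu)"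
    by (simp add: s2 prod.distrib mult_ac)
  finally have main: "tmul n r (rho q r d1) (rho q r d2) w u = (\<Prod>m<r. A m) * (\<Prod>m<r. B m) * ((\<Prod>m<r. C m) * Bu)" .
  have PB: "(\<Prod>m<r. B m) = qint n q ^ pp_N r d1 d2"
  proof -
    have "(\<Prod>m<r. B m) = qint n q ^ card {m\<in>{..<r}. m \<notin> ran d1 \<and> m \<notin> dom d2}"
      unfolding B_def by (simp add: prod_const_if)
    also have "{m\<in>{..<r}. m \<notin> ran d1 \<and> m \<notin> dom d2} = {..<r} - (ran d1 \<union> dom d2)" by auto
    also have "card \<dots> = r - card (ran d1 \<union> dom d2)"
    proof -
      have sub: "ran d1 \<union> dom d2 \<subseteq> {..<r}" using f1(2) f2(1) by (auto simp: ran_def dom_def)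
      hence "finite (ran d1 \<union> dom d2)" using finite_subset by blast
      thus ?thesis using sub by (simp add: card_Diff_subset)
    qed
    finally show ?thesis by (simp add: pp_N_def)
  qed
  have PA: "(\<Prod>m<r. A m) = (if \<forall>k<r. \<forall>j. pp_comp d1 d2 k = Some j \<longrightarrow> w!k = u!j then 1 else 0)"
  proof -
    have "(\<Prod>m<r. A m) = (if \<forall>m\<in>{..<r}. \<forall>k j. d1 k = Some m \<longrightarrow> d2 m = Some j \<longrightarrow> w!k = u!j then 1 else 0)"
      unfolding A_def by (simp add: prod_ind)
    also have "(\<forall>m\<in>{..<r}. \<forall>k j. d1 k = Some m \<longrightarrow> d2 m = Some j \<longrightarrow> w!k = u!j)
        \<longleftrightarrow> (\<forall>k<r. \<forall>j. pp_comp d1 d2 k = Some j \<longrightarrow> w!k = u!j)"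
      unfolding pp_comp_def map_comp_def using f1(1,2) by (auto split: option.splits) (metis lessThan_iff)
    finally show ?thesis .
  qed
  have PC: "(\<Prod>m<r. C m) * Bu = (\<Prod>m\<in>{..<r} - ran (pp_comp d1 d2). q^(u!m))"
  proof -
    define S where "S = {m\<in>{..<r}. m \<notin> ran d1 \<and> m \<in> dom d2}"
    define T where "T = (\<lambda>m. the (d2 m)) ` S"
    have "(\<Prod>m<r. C m) = (\<Prod>m\<in>S. q^(u!(the (d2 m))))"
      unfolding C_def S_def by (simp add: prod.inter_filter[symmetric])
    also have "\<dots> = (\<Prod>j\<in>T. q^(u!j))"
    proof -
      have "inj_on (\<lambda>m. the (d2 m)) S"
        unfolding inj_on_def S_def using f2(3) by (auto simp: dom_def)
      thus ?thesis unfolding T_def by (simp add: prod.reindex)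
    qed
    finally have c: "(\<Prod>m<r. C m) = (\<Prod>j\<in>T. q^(u!j))" .
    have fT: "finite T" unfolding T_def S_def by simp
    have dj: "T \<inter> ({..<r} - ran d2) = {}" unfolding T_def S_def by (auto simp: ran_def dom_def)
    have "(\<Prod>m<r. C m) * Bu = (\<Prod>j\<in>T \<union> ({..<r} - ran d2). q^(u!j))"
      unfolding c Bu_def using fT dj by (simp add: prod.union_disjoint)
    also have "T \<union> ({..<r} - ran d2) = {..<r} - ran (pp_comp d1 d2)"
    proof
      show "T \<union> ({..<r} - ran d2) \<subseteq> {..<r} - ran (pp_comp d1 d2)"
      proof
        fix j assume j: "j \<in> T \<union> ({..<r} - ran d2)"
        show "j \<in> {..<r} - ran (pp_comp d1 d2)"
        proof (cases "j \<in> T")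
          case True
          then obtain m where m: "m < r" "m \<notin> ran d1" "d2 m = Some j"
            unfolding T_def S_def by (auto simp: dom_def)
          have "j < r" using f2(2)[OF m(3)] .
          moreover have "j \<notin> ran (pp_comp d1 d2)"
          proof
            assume "j \<in> ran (pp_comp d1 d2)"
            then obtain k where "(d2 \<circ>\<^sub>m d1) k = Some j" unfolding pp_comp_def ran_def by auto
            then obtain m' where "d1 k = Some m'" "d2 m' = Some j" by (auto simp: map_comp_def split: option.splits)
            with f2(3)[OF m(3)] m(2) show False by (auto simp: ran_def)
          qed
          ultimately show ?thesis by simp
        next
          case False
          with j have "j < r" "j \<notin> ran d2" by auto
          moreover have "ran (pp_comp d1 d2) \<subseteq> ran d2"
            unfolding pp_comp_def ran_def map_comp_def by (auto split: option.splits)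
          ultimately show ?thesis by auto
        qed
      qed
    next
      show "{..<r} - ran (pp_comp d1 d2) \<subseteq> T \<union> ({..<r} - ran d2)"
      proof
        fix j assume j: "j \<in> {..<r} - ran (pp_comp d1 d2)"
        show "j \<in> T \<union> ({..<r} - ran d2)"
        proof (cases "j \<in> ran d2")
          case True
          then obtain m where m: "d2 m = Some j" by (auto simp: ran_def)
          have "m \<notin> ran d1"
          proof
            assume "m \<in> ran d1"
            then obtain k where "d1 k = Some m" by (auto simp: ran_def)
            hence "pp_comp d1 d2 k = Some j" using m by (simp add: pp_comp_def map_comp_def)
            with j show False by (auto simp: ran_def)
          qed
          moreover have "m < r" using f2(1)[OF m] .
          ultimately have "m \<in> S" unfolding S_def using m by auto
          hence "j \<in> T" unfolding T_def using m by force
          thus ?thesis by simp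
        qed (use j in auto)
      qed
    qed
    finally show ?thesis .
  qed
  show ?thesis unfolding main PA PB PC by (simp add: rho_def mult_ac)
qed



lemma ran_pp_id: "ran (pp_id r) = {..<r}"
proof
  show "ran (pp_id r) \<subseteq> {..<r}" by (auto simp: pp_id_def ran_def split: if_splits)
  show "{..<r} \<subseteq> ran (pp_id r)"
  proof
    fix x assume "x \<in> {..<r}" thus "x \<in> ran (pp_id r)" by (intro ranI[of _ x]) (simp add: pp_id_def)
  qed
qed

lemma ran_pp_s: "Suc i < r \<Longrightarrow> ran (pp_s r i) = {..<r}"
proof
  assume i: "Suc i < r"
  show "ran (pp_s r i) \<subseteq> {..<r}" using i by (auto simp: pp_s_def ran_def split: if_splits)
  show "{..<r} \<subseteq> ran (pp_s r i)"
  proof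
    fix x assume x: "x \<in> {..<r}"
    show "x \<in> ran (pp_s r i)"
    proof (rule ranI[of _ "if x = i then Suc i else if x = Suc i then i else x"])
      show "pp_s r i (if x = i then Suc i else if x = Suc i then i else x) = Some x"
        using x i unfolding pp_s_def by auto
    qed
  qed
qed

lemma ran_pp_p: "ran (pp_p r j) = {..<r} - {j}"
proof
  show "ran (pp_p r j) \<subseteq> {..<r} - {j}" by (auto simp: pp_p_def ran_def split: if_splits)
  show "{..<r} - {j} \<subseteq> ran (pp_p r j)"
  proof
    fix x assume "x \<in> {..<r} - {j}" thus "x \<in> ran (pp_p r j)" by (intro ranI[of _ x]) (simp add: pp_p_def)
  qed
qed
lemma rho_id: "w \<in> words n r \<Longrightarrow> u \<in> words n r \<Longrightarrow> rho q r (pp_id r) w u = tid w u"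
  unfolding rho_def ran_pp_id
  by (auto simp: list_eq_iff_nth_eq tid_def words_def pp_id_def)

lemma rho_s: "Suc i < r \<Longrightarrow> w \<in> words n r \<Longrightarrow> u \<in> words n r \<Longrightarrow> rho q r (pp_s r i) w u = swap_op i w u"
proof -
  assume i: "Suc i < r" and w: "w \<in> words n r" and u: "u \<in> words n r"
  have lw: "length w = r" "length u = r" using w u by (auto simp: words_def)
  have "(\<forall>k<r. \<forall>m. pp_s r i k = Some m \<longrightarrow> w!k = u!m) \<longleftrightarrow> w = u[i := u ! Suc i, Suc i := u ! i]"
  proof
    assume H: "\<forall>k<r. \<forall>m. pp_s r i k = Some m \<longrightarrow> w!k = u!m"
    show "w = u[i := u ! Suc i, Suc i := u ! i]"
    proof (rule nth_equalityI)
      show "length w = length (u[i := u ! Suc i, Suc i := u ! i])" using lw by simp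
      fix k assume "k < length w"
      hence k: "k < r" using lw by simp
      have "w!k = u!(if k = i then Suc i else if k = Suc i then i else k)"
        using H k by (simp add: pp_s_def)
      thus "w ! k = u[i := u ! Suc i, Suc i := u ! i] ! k"
        using k lw i by (auto simp: nth_list_update)
    qed
  next
    assume H: "w = u[i := u ! Suc i, Suc i := u ! i]"
    show "\<forall>k<r. \<forall>m. pp_s r i k = Some m \<longrightarrow> w!k = u!m"
      using H lw i by (auto simp: pp_s_def nth_list_update)
  qed
  thus ?thesis unfolding rho_def ran_pp_s[OF i] swap_op_def by simp
qed

lemma rho_p: "j < r \<Longrightarrow> w \<in> words n r \<Longrightarrow> u \<in> words n r \<Longrightarrow> rho q r (pp_p r j) w u = P_op q j w u"
proof -
  assume j: "j < r" and w: "w \<in> words n r" and u: "u \<in> words n r"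
  have "{..<r} - ran (pp_p r j) = {j}" using j by (auto simp: ran_pp_p)
  moreover have "(\<forall>k<r. \<forall>m. pp_p r j k = Some m \<longrightarrow> w!k = u!m) \<longleftrightarrow> (\<forall>k<r. k \<noteq> j \<longrightarrow> w!k = u!k)"
    by (auto simp: pp_p_def)
  moreover have "length w = r" "length u = r" using w u by (auto simp: words_def)
  ultimately show ?thesis unfolding rho_def P_op_def by (simp; blast)
qed

theorem lemma9p1:
  fixes n r :: nat and q1 q2 :: complex
  assumes "n \<ge> 2" and "r \<ge> 1" and "q1 * q2 \<noteq> 0"
    and "\<forall>k::nat. k > 0 \<longrightarrow> (- q2 / q1) ^ k \<noteq> 1"
  shows "\<exists>\<rho> :: (nat \<Rightarrow> nat option) \<Rightarrow> tmat.
           (\<forall>d1 d2. partial_perm r d1 \<longrightarrow> partial_perm r d2 \<longrightarrow>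
              (\<forall>w\<in>words n r. \<forall>u\<in>words n r.
                 tmul n r (\<rho> d1) (\<rho> d2) w u
                 = tscale (qint n (- q2 / q1) ^ pp_N r d1 d2) (\<rho> (pp_comp d1 d2)) w u))
         \<and> (\<forall>w\<in>words n r. \<forall>u\<in>words n r. \<rho> (pp_id r) w u = tid w u)
         \<and> (\<forall>i. Suc i < r \<longrightarrow> (\<forall>w\<in>words n r. \<forall>u\<in>words n r. \<rho> (pp_s r i) w u = swap_op i w u))
         \<and> (\<forall>j. j < r \<longrightarrow> (\<forall>w\<in>words n r. \<forall>u\<in>words n r.
                 \<rho> (pp_p r j) w u = P_op (- q2 / q1) j w u))"
proof (rule exI[of _ "rho (- q2 / q1) r"], intro conjI allI impI ballI)
  fix d1 d2 w u assume h: "partial_perm r d1" "partial_perm r d2" "w \<in> words n r" "u \<in> words n r"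
  show "tmul n r (rho (- q2 / q1) r d1) (rho (- q2 / q1) r d2) w u
        = tscale (qint n (- q2 / q1) ^ pp_N r d1 d2) (rho (- q2 / q1) r (pp_comp d1 d2)) w u"
    using rho_mult[OF h, of "- q2 / q1"] by (simp only: tscale_def)
next
  fix w u assume "w \<in> words n r" "u \<in> words n r"
  thus "rho (- q2 / q1) r (pp_id r) w u = tid w u" by (rule rho_id)
next
  fix i w u assume "Suc i < r" "w \<in> words n r" "u \<in> words n r"
  thus "rho (- q2 / q1) r (pp_s r i) w u = swap_op i w u" by (rule rho_s)
next
  fix j w u assume "j < r" "w \<in> words n r" "u \<in> words n r"
  thus "rho (- q2 / q1) r (pp_p r j) w u = P_op (- q2 / q1) j w u" by (rule rho_p)
qed

end
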